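(* Let $\mathbb{K}$ be a field, $A\in\mathbb{K}[x]^{m\times n}$, and $J=\{j_1<\dots<j_k\}\subseteq\{1,\dots,n\}$. Let $\phi_J:\{1,\dots,k\}\to\{1,\dots,n\}$ be given by $\phi_J(i)=j_i$, applied entrywise to tuples, and let $A_{*,J}$ be the submatrix of $A$ formed by the columns with indices in $J$. Then, viewing pivot supports as sets, $\rho(A)\cap J\subseteq\phi_J(\rho(A_{*,J}))$, and equality holds whenever $\rho(A)\subseteq J$.
   Context: For a row vector $p=[p_1,\dots,p_n]$, $\deg(p)=\max_j\deg(p_j)$; the pivot index of a nonzero $p$ is the largest $j$ with $\deg(p_j)=\deg(p)$, and $p_j$ is its pivot entry. A matrix $P\in\mathbb{K}[x]^{k\times n}$ is in Popov form if it has no zero row, the pivot indices of its rows are strictly increasing, its pivot entries are monic, and in each column containing a pivot entry all other entries have degree strictly less than that pivot entry. The Popov form of a matrix $M$ of rank $r$ is the unique matrix in $\mathbb{K}[x]^{r\times n}$ in Popov form whose rows generate the same $\mathbb{K}[x]$-module as the rows of $M$. The pivot support $\rho(M)$ of $M$ is the tuple of pivot indices of the rows of its Popov form (the empty tuple if $M$ has rank $0$). *)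

theory Defs
  imports "Jordan_Normal_Form.DL_Submatrix" "HOL-Computational_Algebra.Polynomial"
begin

text \<open>Indices are 0-based. The zero polynomial is treated as having
  degree minus infinity: only nonzero entries are taken into account.\<close>

definition vdeg :: "'a::zero poly vec \<Rightarrow> nat" where
  "vdeg p = Max {degree (p $ j) | j. j < dim_vec p \<and> p $ j \<noteq> 0}"

definition pivot_index :: "'a::zero poly vec \<Rightarrow> nat" where
  "pivot_index p = Max {j. j < dim_vec p \<and> p $ j \<noteq> 0 \<and> degree (p $ j) = vdeg p}"

definition is_popov :: "'a::field poly mat \<Rightarrow> bool" where
  "is_popov P \<longleftrightarrow>
     (\<forall>i < dim_row P. row P i \<noteq> 0\<^sub>v (dim_col P)) \<and>
     (\<forall>i i'. i < i' \<and> i' < dim_row P \<longrightarrow> pivot_index (row P i) < pivot_index (row P i')) \<and>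
     (\<forall>i < dim_row P. lead_coeff (P $$ (i, pivot_index (row P i))) = 1) \<and>
     (\<forall>i < dim_row P. \<forall>i' < dim_row P. i' \<noteq> i \<longrightarrow>
        P $$ (i', pivot_index (row P i)) = 0 \<or>
        degree (P $$ (i', pivot_index (row P i))) < degree (P $$ (i, pivot_index (row P i))))"

definition row_module :: "'a::comm_ring_1 mat \<Rightarrow> 'a vec set" where
  "row_module M = {vec (dim_col M) (\<lambda>j. \<Sum>i<dim_row M. c i * M $$ (i, j)) | c. True}"

definition popov_form :: "'a::field poly mat \<Rightarrow> 'a poly mat" where
  "popov_form M = (THE P. is_popov P \<and> dim_col P = dim_col M \<and> row_module P = row_module M)"

definition pivot_support :: "'a::field poly mat \<Rightarrow> nat list" where
  "pivot_support M = map (\<lambda>i. pivot_index (row (popov_form M) i)) [0..<dim_row (popov_form M)]"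

end

theory Submission imports Defs begin

definition tc :: "'a::zero poly vec \<Rightarrow> nat \<Rightarrow> 'a" where
  "tc v t = coeff (v $ (t mod dim_vec v)) (t div dim_vec v)"

definition lt :: "'a::zero poly vec \<Rightarrow> nat" where
  "lt v = Max {t. tc v t \<noteq> 0}"

lemma code_div[simp]: "j < (n::nat) \<Longrightarrow> (a*n+j) div n = a" by auto
lemma code_mod[simp]: "j < (n::nat) \<Longrightarrow> (a*n+j) mod n = j" by auto

lemma code_le: fixes n :: nat assumes "j < n" "j' < n"
  shows "(a*n+j \<le> a'*n+j') = (a < a' \<or> a = a' \<and> j \<le> j')"
proof
  assume h: "a*n+j \<le> a'*n+j'"
  show "a < a' \<or> a = a' \<and> j \<le> j'"
  proof (rule ccontr)
    assume "\<not> ?thesis"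
    then have "a' < a \<or> a = a' \<and> j' < j" by auto
    then show False
    proof
      assume "a' < a"
      then have "(a'+1)*n \<le> a*n" by (intro mult_le_mono1) auto
      then show False using h assms by (simp add: algebra_simps)
    qed (use h in auto)
  qed
next
  assume "a < a' \<or> a = a' \<and> j \<le> j'"
  then show "a*n+j \<le> a'*n+j'"
  proof
    assume "a < a'"
    then have "(a+1)*n \<le> a'*n" by (intro mult_le_mono1) auto
    then show ?thesis using assms by (simp add: algebra_simps)
  qed auto
qed

lemma code_le_D: fixes n :: nat assumes "j < n" "j' < n" "a*n+j \<le> a'*n+j'" shows "a \<le> a'"
  using code_le[OF assms(1,2)] assms(3) by auto

lemma code_decomp: "0 < (n::nat) \<Longrightarrow> t = (t div n)*n + t mod n" by simp

lemma tc_code: "j < dim_vec v \<Longrightarrow> tc v (a * dim_vec v + j) = coeff (v $ j) a"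
  unfolding tc_def by simp

lemma tc_bound: assumes "tc v t \<noteq> 0" "dim_vec v > 0"
  shows "t < (Suc (\<Sum>j<dim_vec v. degree (v $ j))) * dim_vec v"
proof -
  let ?n = "dim_vec v"
  let ?j = "t mod ?n"
  have j: "?j < ?n" using assms by simp
  have "coeff (v $ ?j) (t div ?n) \<noteq> 0" using assms unfolding tc_def by simp
  then have "t div ?n \<le> degree (v $ ?j)" using le_degree by blast
  also have "\<dots> \<le> (\<Sum>j<?n. degree (v $ j))"
    by (rule member_le_sum) (use j in auto)
  finally have "t div ?n < Suc (\<Sum>j<?n. degree (v $ j))" by simp
  then have "Suc (t div ?n) * ?n \<le> Suc (\<Sum>j<?n. degree (v $ j)) * ?n"
    by (intro mult_le_mono1) simp
  moreover have "t < Suc (t div ?n) * ?n" using j div_mult_mod_eq[of t ?n] by (simp only: mult_Suc)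
  ultimately show ?thesis by linarith
qed

lemma terms_finite: "dim_vec v > 0 \<Longrightarrow> finite {t. tc v t \<noteq> 0}"
  by (rule finite_subset[of _ "{..< (Suc (\<Sum>j<dim_vec v. degree (v $ j))) * dim_vec v}"])
     (use tc_bound in auto)

lemma nz_dim: "v \<noteq> 0\<^sub>v (dim_vec v) \<Longrightarrow> dim_vec v > 0"
  by (metis eq_vecI gr0I index_zero_vec(2) less_nat_zero_code)

lemma nz_ex: assumes "v \<noteq> 0\<^sub>v (dim_vec v)"
  shows "\<exists>t. tc v t \<noteq> 0"
proof -
  obtain j where j: "j < dim_vec v" "v $ j \<noteq> 0"
    using assms by (metis eq_vecI index_zero_vec)
  have "lead_coeff (v $ j) \<noteq> 0" using j by simp
  then show ?thesis using tc_code[OF j(1), of "degree (v $ j)"] by metis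
qed

lemma tc_nz: assumes "tc v t \<noteq> 0" "dim_vec v > 0" shows "v \<noteq> 0\<^sub>v (dim_vec v)"
proof
  assume "v = 0\<^sub>v (dim_vec v)"
  then have "v $ (t mod dim_vec v) = 0" using assms(2) by (metis index_zero_vec(1) mod_less_divisor)
  then show False using assms unfolding tc_def by simp
qed

lemma lt_tc: assumes "v \<noteq> 0\<^sub>v (dim_vec v)" shows "tc v (lt v) \<noteq> 0"
proof -
  have "finite {t. tc v t \<noteq> 0}" "{t. tc v t \<noteq> 0} \<noteq> {}"
    using terms_finite nz_dim nz_ex assms by auto
  from Max_in[OF this] show ?thesis unfolding lt_def by simp
qed

lemma lt_max: assumes "tc v t \<noteq> 0" "dim_vec v > 0" shows "t \<le> lt v"
  unfolding lt_def using terms_finite[OF assms(2)] assms(1) by (simp add: Max_ge)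

lemma tc_above: assumes "lt v < t" "dim_vec v > 0" shows "tc v t = 0"
  using lt_max[OF _ assms(2), of t] assms(1) by auto

lemma lt_unique: assumes "tc v t0 \<noteq> 0" "dim_vec v > 0" "\<And>t. t0 < t \<Longrightarrow> tc v t = 0"
  shows "lt v = t0"
proof -
  have "\<not> t0 < lt v" using lt_tc[OF tc_nz[OF assms(1,2)]] assms(3) by blast
  then show ?thesis using lt_max[OF assms(1,2)] by linarith
qed

lemma entry_le_lt: assumes "j < dim_vec v" "v $ j \<noteq> 0"
  shows "degree (v $ j) * dim_vec v + j \<le> lt v"
  by (rule lt_max) (use assms tc_code[OF assms(1)] in auto)

lemma lt_props: assumes v: "v \<noteq> 0\<^sub>v (dim_vec v)"
  defines "n \<equiv> dim_vec v"
  shows "lt v mod n < n" "v $ (lt v mod n) \<noteq> 0" "degree (v $ (lt v mod n)) = lt v div n"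
    "lead_coeff (v $ (lt v mod n)) = tc v (lt v)"
    "pivot_index v = lt v mod n" "vdeg v = lt v div n"
proof -
  have n: "n > 0" using nz_dim v n_def by auto
  let ?j = "lt v mod n" and ?a = "lt v div n"
  show j: "?j < n" using n by simp
  have c: "coeff (v $ ?j) ?a \<noteq> 0" using lt_tc[OF v] unfolding tc_def n_def by simp
  then show nz: "v $ ?j \<noteq> 0" by auto
  have le: "?a \<le> degree (v $ ?j)" using c le_degree by blast
  have dec: "lt v = ?a * n + ?j" by simp
  have "degree (v $ ?j) * n + ?j \<le> lt v"
    using entry_le_lt[of ?j v] j nz n_def by simp
  then have "degree (v $ ?j) * n + ?j \<le> ?a * n + ?j" using dec by (rule ord_le_eq_trans)
  then have "degree (v $ ?j) \<le> ?a" by (rule code_le_D[OF j j])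
  with le show dg: "degree (v $ ?j) = ?a" by simp
  show "lead_coeff (v $ ?j) = tc v (lt v)" unfolding tc_def n_def[symmetric] using dg by simp
  have bnd: "degree (v $ j) \<le> ?a" if "j < n" "v $ j \<noteq> 0" for j
  proof -
    have "degree (v $ j) * n + j \<le> lt v"
      using entry_le_lt[of j v] that n_def by simp
    then have "degree (v $ j) * n + j \<le> ?a * n + ?j" using dec by (rule ord_le_eq_trans)
    then show ?thesis by (rule code_le_D[OF that(1) j])
  qed
  have vd: "vdeg v = ?a" unfolding vdeg_def n_def[symmetric]
  proof (rule Max_eqI)
    show "?a \<in> {degree (v $ j) |j. j < n \<and> v $ j \<noteq> 0}"
      by (rule CollectI, rule exI[of _ ?j]) (use nz j dg in auto)
  qed (use bnd in auto)
  then show "vdeg v = ?a" .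
  show "pivot_index v = ?j" unfolding pivot_index_def n_def[symmetric] vd
  proof (rule Max_eqI)
    fix y assume y: "y \<in> {j. j < n \<and> v $ j \<noteq> 0 \<and> degree (v $ j) = ?a}"
    then have "degree (v $ y) * n + y \<le> lt v"
      using entry_le_lt[of y v] n_def by simp
    then have "?a * n + y \<le> lt v" using y by simp
    then have "?a * n + y \<le> ?a * n + ?j" using dec by (rule ord_le_eq_trans)
    then show "y \<le> ?j" by (rule add_le_imp_le_left)
  qed (use nz j dg in auto)
qed

lemma tc_smult: "dim_vec v > 0 \<Longrightarrow> tc (c \<cdot>\<^sub>v v) t = coeff (c * v $ (t mod dim_vec v)) (t div dim_vec v)"
  unfolding tc_def by simp

lemma lt_smult: fixes c :: "'a::field poly"
  assumes c: "c \<noteq> 0" and v: "v \<noteq> 0\<^sub>v (dim_vec v)"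
  shows "c \<cdot>\<^sub>v v \<noteq> 0\<^sub>v (dim_vec v)" "lt (c \<cdot>\<^sub>v v) = degree c * dim_vec v + lt v"
    "tc (c \<cdot>\<^sub>v v) (lt (c \<cdot>\<^sub>v v)) = lead_coeff c * tc v (lt v)"
proof -
  let ?n = "dim_vec v"
  have n: "?n > 0" using nz_dim v by auto
  note P = lt_props[OF v]
  let ?j = "lt v mod ?n" and ?a = "lt v div ?n"
  let ?t0 = "degree c * ?n + lt v"
  have t0: "?t0 = (degree c + ?a) * ?n + ?j" using code_decomp[OF n, of "lt v"]
    by (simp add: algebra_simps)
  have "tc (c \<cdot>\<^sub>v v) ?t0 = coeff (c * v $ ?j) (degree c + degree (v $ ?j))"
    unfolding tc_smult[OF n] t0 using P by simp
  also have "\<dots> = lead_coeff c * tc v (lt v)"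
  proof -
    have "coeff (c * v $ ?j) (degree c + degree (v $ ?j)) = lead_coeff c * lead_coeff (v $ ?j)"
      by (rule coeff_mult_degree_sum)
    then show ?thesis using P(4) by simp
  qed
  finally have e: "tc (c \<cdot>\<^sub>v v) ?t0 = lead_coeff c * tc v (lt v)" .
  have nz: "tc (c \<cdot>\<^sub>v v) ?t0 \<noteq> 0" unfolding e using c lt_tc[OF v] by simp
  have above: "tc (c \<cdot>\<^sub>v v) t = 0" if "?t0 < t" for t
  proof -
    let ?k = "t mod ?n" and ?b = "t div ?n"
    have k: "?k < ?n" using n by simp
    show ?thesis
    proof (cases "v $ ?k = 0")
      case True then show ?thesis unfolding tc_smult[OF n] by simp
    next
      case False
      have e1: "degree (v $ ?k) * ?n + ?k \<le> lt v" using entry_le_lt[OF k False] .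
      have e2: "(degree c + degree (v $ ?k)) * ?n + ?k = degree c * ?n + (degree (v $ ?k) * ?n + ?k)"
        by (simp only: add_mult_distrib add.assoc)
      have tdec: "t = ?b * ?n + ?k" by simp
      have "(degree c + degree (v $ ?k)) * ?n + ?k < ?b * ?n + ?k"
        using e1 e2 tdec that by linarith
      then have "degree c + degree (v $ ?k) < ?b" by (metis add_less_cancel_right mult_less_cancel2)
      then have "degree (c * v $ ?k) < ?b" using degree_mult_le[of c "v $ ?k"] by linarith
      then show ?thesis unfolding tc_smult[OF n] by (simp add: coeff_eq_0)
    qed
  qed
  have dd: "dim_vec (c \<cdot>\<^sub>v v) = ?n" by simp
  have "lt (c \<cdot>\<^sub>v v) = ?t0" by (rule lt_unique) (use nz above n in auto)
  then show "lt (c \<cdot>\<^sub>v v) = ?t0" "tc (c \<cdot>\<^sub>v v) (lt (c \<cdot>\<^sub>v v)) = lead_coeff c * tc v (lt v)"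
    using e by auto
  show "c \<cdot>\<^sub>v v \<noteq> 0\<^sub>v (dim_vec v)" using tc_nz[of "c \<cdot>\<^sub>v v" ?t0] nz n by simp
qed

definition comb :: "nat \<Rightarrow> nat \<Rightarrow> (nat \<Rightarrow> 'a::comm_ring_1 poly) \<Rightarrow> (nat \<Rightarrow> 'a poly vec) \<Rightarrow> 'a poly vec" where
  "comb n k c b = vec n (\<lambda>j. \<Sum>i<k. c i * b i $ j)"

lemma dim_comb[simp]: "dim_vec (comb n k c b) = n" unfolding comb_def by simp

lemma tc_comb: assumes n: "n > 0" and dims: "\<forall>i<k. dim_vec (b i) = n"
  shows "tc (comb n k c b) t = (\<Sum>i<k. tc (c i \<cdot>\<^sub>v b i) t)"
proof -
  have "tc (comb n k c b) t = (\<Sum>i<k. coeff (c i * b i $ (t mod n)) (t div n))"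
    unfolding tc_def comb_def using n by (simp add: coeff_sum)
  also have "\<dots> = (\<Sum>i<k. tc (c i \<cdot>\<^sub>v b i) t)"
  proof (rule sum.cong)
    fix i assume "i \<in> {..<k}"
    then have "dim_vec (b i) = n" using dims by simp
    then show "coeff (c i * b i $ (t mod n)) (t div n) = tc (c i \<cdot>\<^sub>v b i) t"
      using tc_smult[of "b i" "c i" t] n by simp
  qed simp
  finally show ?thesis .
qed

lemma tc_smult_zero: "dim_vec v > 0 \<Longrightarrow> tc (0 \<cdot>\<^sub>v v) t = 0"
  using tc_smult[of v 0 t] by simp

lemma PP: fixes b :: "nat \<Rightarrow> 'a::field poly vec"
  assumes n: "n > 0" and dims: "\<forall>i<k. dim_vec (b i) = n" and nz: "\<forall>i<k. b i \<noteq> 0\<^sub>v n"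
  and dist: "\<forall>i<k. \<forall>i'<k. i \<noteq> i' \<longrightarrow> lt (b i) mod n \<noteq> lt (b i') mod n"
  and ex: "\<exists>i<k. c i \<noteq> 0"
  shows "comb n k c b \<noteq> 0\<^sub>v n \<and> (\<exists>i<k. c i \<noteq> 0 \<and> lt (comb n k c b) = degree (c i) * n + lt (b i))"
proof -
  define I where "I = {i. i < k \<and> c i \<noteq> 0}"
  define L where "L i = degree (c i) * n + lt (b i)" for i
  have fin: "finite I" unfolding I_def by simp
  have ne: "I \<noteq> {}" using ex unfolding I_def by auto
  have "Max (L ` I) \<in> L ` I" using fin ne by simp
  then obtain i0 where i0: "i0 \<in> I" "L i0 = Max (L ` I)" by auto
  have Lle: "L i \<le> L i0" if "i \<in> I" for i using that i0 fin by simp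
  have bnz: "b i \<noteq> 0\<^sub>v (dim_vec (b i))" if "i \<in> I" for i using that nz dims unfolding I_def by auto
  have ltI: "lt (c i \<cdot>\<^sub>v b i) = L i" if "i \<in> I" for i
    using lt_smult(2)[OF _ bnz[OF that]] that dims unfolding I_def L_def by auto
  have tcI: "tc (c i \<cdot>\<^sub>v b i) (L i) \<noteq> 0" if "i \<in> I" for i
  proof -
    have "c i \<noteq> 0" using that unfolding I_def by simp
    then show ?thesis
      using lt_smult(3)[OF _ bnz[OF that], of "c i"] ltI[OF that] lt_tc[OF bnz[OF that]] by simp
  qed
  have dimI: "dim_vec (c i \<cdot>\<^sub>v b i) > 0" if "i < k" for i using dims n that by simp
  have zero: "tc (c i \<cdot>\<^sub>v b i) t = 0" if "i < k" "i \<noteq> i0" "L i0 \<le> t" for i t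
  proof (cases "i \<in> I")
    case True
    have "L i mod n \<noteq> L i0 mod n" using dist that i0(1) True unfolding L_def I_def by simp
    then have "L i < L i0" using Lle[OF True] by (metis le_neq_implies_less)
    then show ?thesis using tc_above[OF _ dimI[OF that(1)], of t] ltI[OF True] that by simp
  next
    case False
    then have "c i = 0" using that unfolding I_def by simp
    then show ?thesis using tc_smult_zero[of "b i" t] dims n that by simp
  qed
  have i0k: "i0 < k" using i0 unfolding I_def by simp
  have split: "tc (comb n k c b) t = tc (c i0 \<cdot>\<^sub>v b i0) t + (\<Sum>i\<in>{..<k} - {i0}. tc (c i \<cdot>\<^sub>v b i) t)" for t
    unfolding tc_comb[OF n dims] using sum.remove[of "{..<k}" i0] i0k by simp
  have rest: "(\<Sum>i\<in>{..<k} - {i0}. tc (c i \<cdot>\<^sub>v b i) t) = 0" if "L i0 \<le> t" for t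
    by (rule sum.neutral) (use zero that in auto)
  have at: "tc (comb n k c b) (L i0) \<noteq> 0" using split rest tcI[OF i0(1)] by simp
  have above: "tc (comb n k c b) t = 0" if "L i0 < t" for t
    using split[of t] rest[of t] that tc_above[OF _ dimI[OF i0k], of t] ltI[OF i0(1)] by simp
  have "lt (comb n k c b) = L i0" by (rule lt_unique) (use at above n in auto)
  moreover have "comb n k c b \<noteq> 0\<^sub>v n" using tc_nz[OF at] n by simp
  ultimately show ?thesis using i0 unfolding I_def L_def by auto
qed


lemma rm_comb: "row_module M = {comb (dim_col M) (dim_row M) c (row M) | c. True}"
proof -
  have "vec (dim_col M) (\<lambda>j. \<Sum>i<dim_row M. c i * M $$ (i, j)) = comb (dim_col M) (dim_row M) c (row M)" for c
    unfolding comb_def by (rule eq_vecI) auto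
  then show ?thesis unfolding row_module_def by auto
qed

lemma rm_dim: "v \<in> row_module M \<Longrightarrow> dim_vec v = dim_col M"
  unfolding row_module_def by auto

lemma rm_add: assumes "u \<in> row_module M" "w \<in> row_module M" shows "u + w \<in> row_module M"
proof -
  obtain cu cw where u: "u = vec (dim_col M) (\<lambda>j. \<Sum>i<dim_row M. cu i * M $$ (i, j))"
    and w: "w = vec (dim_col M) (\<lambda>j. \<Sum>i<dim_row M. cw i * M $$ (i, j))"
    using assms unfolding row_module_def by auto
  have "u + w = vec (dim_col M) (\<lambda>j. \<Sum>i<dim_row M. (\<lambda>i. cu i + cw i) i * M $$ (i, j))"
    unfolding u w by (rule eq_vecI) (auto simp: sum.distrib distrib_right)
  then show ?thesis unfolding row_module_def by (intro CollectI exI[of _ "\<lambda>i. cu i + cw i"]) simp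
qed

lemma rm_smult: assumes "u \<in> row_module M" shows "a \<cdot>\<^sub>v u \<in> row_module M"
proof -
  obtain cu where u: "u = vec (dim_col M) (\<lambda>j. \<Sum>i<dim_row M. cu i * M $$ (i, j))"
    using assms unfolding row_module_def by auto
  have "a \<cdot>\<^sub>v u = vec (dim_col M) (\<lambda>j. \<Sum>i<dim_row M. (\<lambda>i. a * cu i) i * M $$ (i, j))"
    unfolding u by (rule eq_vecI) (auto simp: sum_distrib_left mult.assoc)
  then show ?thesis unfolding row_module_def by (intro CollectI exI[of _ "\<lambda>i. a * cu i"]) simp
qed

lemma rm_diff: fixes M :: "'a::comm_ring_1 mat"
  assumes "u \<in> row_module M" "w \<in> row_module M" shows "u - w \<in> row_module M"
proof -
  have "u - w = u + ((-1) \<cdot>\<^sub>v w)" using rm_dim[OF assms(1)] rm_dim[OF assms(2)]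
    by (intro eq_vecI) auto
  then show ?thesis using rm_add[OF assms(1) rm_smult[OF assms(2)]] by simp
qed

lemma rm_row: assumes "i < dim_row M" shows "row M i \<in> row_module M"
proof -
  have "row M i = vec (dim_col M) (\<lambda>j. \<Sum>i'<dim_row M. (\<lambda>i'. if i' = i then 1 else 0) i' * M $$ (i', j))"
  proof (rule eq_vecI)
    fix j assume j: "j < dim_vec (vec (dim_col M) (\<lambda>j. \<Sum>i'<dim_row M. (\<lambda>i'. if i' = i then 1 else 0) i' * M $$ (i', j)))"
    have "(\<Sum>i'<dim_row M. (if i' = i then 1 else 0) * M $$ (i', j)) = (\<Sum>i'<dim_row M. if i' = i then M $$ (i', j) else 0)"
      by (rule sum.cong) auto
    also have "\<dots> = M $$ (i, j)" using assms by (simp add: sum.delta)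
    finally show "row M i $ j = vec (dim_col M) (\<lambda>j. \<Sum>i'<dim_row M. (\<lambda>i'. if i' = i then 1 else 0) i' * M $$ (i', j)) $ j"
      using j assms by simp
  qed simp
  then show ?thesis unfolding row_module_def by (intro CollectI exI[of _ "\<lambda>i'. if i' = i then 1 else 0"]) simp
qed

lemma rm_zero: "0\<^sub>v (dim_col M) \<in> row_module M"
proof -
  have "0\<^sub>v (dim_col M) = vec (dim_col M) (\<lambda>j. \<Sum>i<dim_row M. (\<lambda>i. 0) i * M $$ (i, j))"
    by (intro eq_vecI) auto
  then show ?thesis unfolding row_module_def by (intro CollectI exI[of _ "\<lambda>i. 0"]) simp
qed

lemma rm_subset: fixes M P :: "'a::comm_ring_1 mat"
  assumes d: "dim_col P = dim_col M" and rows: "\<forall>i<dim_row P. row P i \<in> row_module M"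
  shows "row_module P \<subseteq> row_module M"
proof
  fix v assume "v \<in> row_module P"
  then obtain c where v: "v = vec (dim_col P) (\<lambda>j. \<Sum>i<dim_row P. c i * P $$ (i, j))"
    unfolding row_module_def by auto
  have "k \<le> dim_row P \<Longrightarrow> vec (dim_col P) (\<lambda>j. \<Sum>i<k. c i * P $$ (i, j)) \<in> row_module M" for k
  proof (induction k)
    case 0
    have "vec (dim_col P) (\<lambda>j. \<Sum>i<0. c i * P $$ (i, j)) = 0\<^sub>v (dim_col M)"
      using d by (intro eq_vecI) auto
    then show ?case using rm_zero[of M] by simp
  next
    case (Suc k)
    have k: "k < dim_row P" "k \<le> dim_row P" using Suc.prems by auto
    have r: "row P k \<in> row_module M" using rows k by simp
    have e: "vec (dim_col P) (\<lambda>j. \<Sum>i<Suc k. c i * P $$ (i, j)) =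
      vec (dim_col P) (\<lambda>j. \<Sum>i<k. c i * P $$ (i, j)) + c k \<cdot>\<^sub>v row P k"
      using k by (intro eq_vecI) auto
    show ?case unfolding e by (rule rm_add[OF Suc.IH[OF k(2)] rm_smult[OF r]])
  qed
  then show "v \<in> row_module M" using v by simp
qed

lemma tc_diff: assumes "dim_vec u = dim_vec w" "dim_vec w > 0"
  shows "tc (u - w) t = tc u t - tc w t"
  unfolding tc_def using assms by simp


lemma sum_pow2_less: assumes "A \<subseteq> {..<m}" shows "(\<Sum>t\<in>A. (2::nat)^t) < 2^m"
proof -
  have f: "finite {..<m}" by simp
  have "(\<Sum>t\<in>A. (2::nat)^t) \<le> (\<Sum>t<m. 2^t)" by (rule sum_mono2[OF f assms]) auto
  also have "(\<Sum>t<m. (2::nat)^t) < 2^m" by (induction m) auto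
  finally show ?thesis .
qed

definition Tset :: "'a::field poly mat \<Rightarrow> nat set" where
  "Tset M = {lt v | v. v \<in> row_module M \<and> v \<noteq> 0\<^sub>v (dim_col M)}"
definition Sset :: "'a::field poly mat \<Rightarrow> nat set" where
  "Sset M = (\<lambda>t. t mod dim_col M) ` Tset M"
definition cmin :: "'a::field poly mat \<Rightarrow> nat \<Rightarrow> nat" where
  "cmin M k = (LEAST t. t \<in> Tset M \<and> t mod dim_col M = k)"
definition Pset :: "'a::field poly mat \<Rightarrow> nat \<Rightarrow> 'a poly vec set" where
  "Pset M k = {p. p \<in> row_module M \<and> p \<noteq> 0\<^sub>v (dim_col M) \<and> lt p = cmin M k \<and> tc p (cmin M k) = 1}"
definition bad :: "'a::field poly mat \<Rightarrow> 'a poly vec \<Rightarrow> nat set" where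
  "bad M p = {t. tc p t \<noteq> 0 \<and> t \<noteq> lt p \<and> t mod dim_col M \<in> Sset M \<and> cmin M (t mod dim_col M) \<le> t}"
definition mu :: "'a::field poly mat \<Rightarrow> 'a poly vec \<Rightarrow> nat" where
  "mu M p = (\<Sum>t\<in>bad M p. 2^t)"

lemma Tset_I: "v \<in> row_module M \<Longrightarrow> v \<noteq> 0\<^sub>v (dim_col M) \<Longrightarrow> lt v \<in> Tset M"
  unfolding Tset_def by auto

lemma Sset_sub: "Sset M \<subseteq> {..<dim_col M}"
proof
  fix k assume "k \<in> Sset M"
  then obtain v where v: "v \<in> row_module M" "v \<noteq> 0\<^sub>v (dim_col M)" "k = lt v mod dim_col M"
    unfolding Sset_def Tset_def by auto
  have "dim_vec v = dim_col M" using rm_dim[OF v(1)] .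
  then have "dim_col M > 0" using nz_dim[of v] v(2) by simp
  then show "k \<in> {..<dim_col M}" using v(3) by simp
qed

lemma cmin_props: assumes "k \<in> Sset M"
  shows "cmin M k \<in> Tset M" "cmin M k mod dim_col M = k"
    "\<And>t. t \<in> Tset M \<Longrightarrow> t mod dim_col M = k \<Longrightarrow> cmin M k \<le> t"
proof -
  obtain t where t: "t \<in> Tset M" "t mod dim_col M = k" using assms unfolding Sset_def by auto
  show "cmin M k \<in> Tset M" "cmin M k mod dim_col M = k"
    using LeastI[of "\<lambda>t. t \<in> Tset M \<and> t mod dim_col M = k", OF conjI[OF t]] unfolding cmin_def by auto
  show "\<And>t. t \<in> Tset M \<Longrightarrow> t mod dim_col M = k \<Longrightarrow> cmin M k \<le> t"
    unfolding cmin_def by (rule Least_le) simp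
qed

lemma Tset_E: assumes "t \<in> Tset M"
  obtains v where "v \<in> row_module M" "v \<noteq> 0\<^sub>v (dim_col M)" "lt v = t"
  using assms unfolding Tset_def by auto

lemma Pset_ne: fixes M :: "'a::field poly mat" assumes k: "k \<in> Sset M" shows "\<exists>p. p \<in> Pset M k"
proof -
  obtain v where v: "v \<in> row_module M" "v \<noteq> 0\<^sub>v (dim_col M)" "lt v = cmin M k"
    using cmin_props(1)[OF k] by (rule Tset_E)
  have dv: "dim_vec v = dim_col M" using rm_dim[OF v(1)] .
  have v': "v \<noteq> 0\<^sub>v (dim_vec v)" using v(2) dv by simp
  define a where "a = tc v (lt v)"
  have a: "a \<noteq> 0" unfolding a_def using lt_tc[OF v'] .
  have c: "[:inverse a:] \<noteq> 0" using a by simp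
  let ?p = "[:inverse a:] \<cdot>\<^sub>v v"
  have "?p \<in> Pset M k" unfolding Pset_def
    using rm_smult[OF v(1)] lt_smult[OF c v'] dv v(3) a unfolding a_def by auto
  then show ?thesis by blast
qed

lemma bad_sub_terms: "bad M p \<subseteq> {t. tc p t \<noteq> 0}" unfolding bad_def by auto

lemma split_code: fixes n :: nat assumes "c mod n = t mod n" "c \<le> t"
  shows "(t div n - c div n) * n + c = t"
proof -
  have e1: "c div n * n + c mod n = c" and e2: "t div n * n + t mod n = t" by simp_all
  have le: "c div n \<le> t div n" using assms(2) by (rule div_le_mono)
  have e3: "(t div n - c div n) * n = t div n * n - c div n * n" by (rule diff_mult_distrib)
  have le2: "c div n * n \<le> t div n * n" using le by (rule mult_le_mono1)
  show ?thesis using e1 e2 e3 le2 assms(1) by linarith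
qed

lemma reduce: fixes M :: "'a::field poly mat"
  assumes k: "k \<in> Sset M" and p: "p \<in> Pset M k" and b: "bad M p \<noteq> {}"
  shows "\<exists>p' \<in> Pset M k. mu M p' < mu M p"
proof -
  let ?n = "dim_col M"
  have pN: "p \<in> row_module M" and pnz: "p \<noteq> 0\<^sub>v ?n" and ltp: "lt p = cmin M k" and tcp: "tc p (cmin M k) = 1"
    using p unfolding Pset_def by auto
  have dp: "dim_vec p = ?n" using rm_dim[OF pN] .
  have n: "?n > 0" using nz_dim[of p] pnz dp by simp
  have finb: "finite (bad M p)" using finite_subset[OF bad_sub_terms terms_finite, of p M] n dp by simp
  define t0 where "t0 = Max (bad M p)"
  have t0b: "t0 \<in> bad M p" unfolding t0_def using finb b by simp
  have t0max: "t \<le> t0" if "t \<in> bad M p" for t unfolding t0_def using finb that by simp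
  define k0 where "k0 = t0 mod ?n"
  have k0: "k0 \<in> Sset M" "cmin M k0 \<le> t0" "tc p t0 \<noteq> 0" "t0 \<noteq> lt p"
    using t0b unfolding bad_def k0_def by auto
  have t0lt: "t0 < lt p" using lt_max[OF k0(3)] n dp k0(4) by simp
  obtain q where q: "q \<in> Pset M k0" using Pset_ne[OF k0(1)] by blast
  have qN: "q \<in> row_module M" and qnz: "q \<noteq> 0\<^sub>v ?n" and ltq: "lt q = cmin M k0" and tcq: "tc q (cmin M k0) = 1"
    using q unfolding Pset_def by auto
  have dq: "dim_vec q = ?n" using rm_dim[OF qN] .
  define e where "e = t0 div ?n - cmin M k0 div ?n"
  have et: "e * ?n + cmin M k0 = t0" unfolding e_def
    by (rule split_code) (use cmin_props(2)[OF k0(1)] k0(2) k0_def in auto)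
  define \<alpha> where "\<alpha> = tc p t0"
  have \<alpha>: "\<alpha> \<noteq> 0" using k0(3) \<alpha>_def by simp
  have mnz: "monom \<alpha> e \<noteq> 0" using \<alpha> by simp
  define s where "s = monom \<alpha> e \<cdot>\<^sub>v q"
  have q': "q \<noteq> 0\<^sub>v (dim_vec q)" using qnz dq by simp
  have lts: "lt s = t0" unfolding s_def using lt_smult(2)[OF mnz q'] et ltq dq by (simp add: degree_monom_eq[OF \<alpha>])
  have tcs: "tc s t0 = \<alpha>" unfolding s_def using lt_smult(3)[OF mnz q'] lts ltq tcq
    unfolding s_def by (simp add: lead_coeff_monom degree_monom_eq[OF \<alpha>])
  have sN: "s \<in> row_module M" unfolding s_def by (rule rm_smult[OF qN])
  have ds: "dim_vec s = ?n" using rm_dim[OF sN] .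
  define p' where "p' = p - s"
  have p'N: "p' \<in> row_module M" unfolding p'_def by (rule rm_diff[OF pN sN])
  have tcp': "tc p' t = tc p t - tc s t" for t unfolding p'_def using tc_diff[of p s t] dp ds n by simp
  have dp': "dim_vec p' = ?n" using rm_dim[OF p'N] .
  have sabove: "tc s t = 0" if "t0 < t" for t using tc_above[of s t] lts that ds n by simp
  have eqabove: "tc p' t = tc p t" if "t0 < t" for t using tcp' sabove[OF that] by simp
  have at0: "tc p' t0 = 0" using tcp' tcs \<alpha>_def by simp
  have tcp'lt: "tc p' (lt p) = 1" using eqabove[OF t0lt] tcp ltp by simp
  have ltp': "lt p' = lt p"
  proof (rule lt_unique)
    show "tc p' (lt p) \<noteq> 0" using tcp'lt by simp
    show "dim_vec p' > 0" using dp' n by simp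
    fix t assume "lt p < t"
    then show "tc p' t = 0" using eqabove[of t] t0lt tc_above[of p t] n dp by simp
  qed
  have p'nz: "p' \<noteq> 0\<^sub>v ?n" using tc_nz[of p' "lt p"] tcp'lt dp' n by simp
  have p'P: "p' \<in> Pset M k" unfolding Pset_def using p'N p'nz ltp' ltp tcp'lt by simp
  have "bad M p' \<subseteq> {..<t0}"
  proof
    fix t assume t: "t \<in> bad M p'"
    have "\<not> t0 < t"
    proof
      assume "t0 < t"
      then have "t \<in> bad M p" using t eqabove[of t] ltp' unfolding bad_def by auto
      then show False using t0max \<open>t0 < t\<close> by fastforce
    qed
    moreover have "t \<noteq> t0" using t at0 unfolding bad_def by auto
    ultimately show "t \<in> {..<t0}" by simp
  qed
  then have "mu M p' < 2^t0" unfolding mu_def by (rule sum_pow2_less)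
  also have "2^t0 \<le> mu M p" unfolding mu_def using member_le_sum[of t0 "bad M p" "\<lambda>t. (2::nat)^t"] finb t0b by simp
  finally show ?thesis using p'P by blast
qed

lemma good_ex: fixes M :: "'a::field poly mat" assumes k: "k \<in> Sset M"
  shows "\<exists>p. p \<in> Pset M k \<and> bad M p = {}"
proof -
  obtain p0 where "p0 \<in> Pset M k" using Pset_ne[OF k] by blast
  then obtain p where p: "p \<in> Pset M k" and min: "\<forall>y. y \<in> Pset M k \<longrightarrow> mu M p \<le> mu M y"
    using ex_has_least_nat[of "\<lambda>p. p \<in> Pset M k" p0 "mu M"] by blast
  have "bad M p = {}"
  proof (rule ccontr)
    assume "bad M p \<noteq> {}"
    then obtain p' where "p' \<in> Pset M k" "mu M p' < mu M p" using reduce[OF k p] by blast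
    then show False using min by fastforce
  qed
  then show ?thesis using p by blast
qed


definition prow :: "'a::field poly mat \<Rightarrow> nat \<Rightarrow> 'a poly vec" where
  "prow M k = (SOME p. p \<in> Pset M k \<and> bad M p = {})"

lemma prow_good: fixes M :: "'a::field poly mat" assumes "k \<in> Sset M"
  shows "prow M k \<in> Pset M k" "bad M (prow M k) = {}"
  using someI_ex[OF good_ex[OF assms]] unfolding prow_def by auto

lemma prow_facts: fixes M :: "'a::field poly mat" assumes k: "k \<in> Sset M"
  shows "prow M k \<in> row_module M" "prow M k \<noteq> 0\<^sub>v (dim_col M)" "dim_vec (prow M k) = dim_col M"
    "pivot_index (prow M k) = k" "lead_coeff (prow M k $ k) = 1"
    "degree (prow M k $ k) = cmin M k div dim_col M"
    "lt (prow M k) = cmin M k"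
proof -
  let ?p = "prow M k" and ?n = "dim_col M"
  have P: "?p \<in> row_module M" "?p \<noteq> 0\<^sub>v ?n" "lt ?p = cmin M k" "tc ?p (cmin M k) = 1"
    using prow_good(1)[OF k] unfolding Pset_def by auto
  show "?p \<in> row_module M" "?p \<noteq> 0\<^sub>v ?n" "lt ?p = cmin M k" using P by auto
  show d: "dim_vec ?p = ?n" using rm_dim[OF P(1)] .
  have nz: "?p \<noteq> 0\<^sub>v (dim_vec ?p)" using P(2) d by simp
  note L = lt_props[OF nz]
  have km: "cmin M k mod ?n = k" using cmin_props(2)[OF k] .
  show "pivot_index ?p = k" using L(5) P(3) km d by simp
  show "lead_coeff (?p $ k) = 1" using L(4) P(3,4) km d by simp
  show "degree (?p $ k) = cmin M k div ?n" using L(3) P(3) km d by simp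
qed

lemma prow_other: fixes M :: "'a::field poly mat"
  assumes k: "k \<in> Sset M" and k': "k' \<in> Sset M" and kk: "k \<noteq> k'"
  shows "prow M k' $ k = 0 \<or> degree (prow M k' $ k) < degree (prow M k $ k)"
proof (rule ccontr)
  let ?q = "prow M k'" and ?n = "dim_col M"
  assume "\<not> ?thesis"
  then have nz: "?q $ k \<noteq> 0" and dg: "degree (prow M k $ k) \<le> degree (?q $ k)" by auto
  have kn: "k < ?n" using Sset_sub k by auto
  have dq: "dim_vec ?q = ?n" using prow_facts(3)[OF k'] .
  define t where "t = degree (?q $ k) * ?n + k"
  have tc: "tc ?q t \<noteq> 0" unfolding t_def using tc_code[of k ?q "degree (?q $ k)"] kn dq nz by simp
  have tm: "t mod ?n = k" unfolding t_def using kn by simp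
  have ltq: "lt ?q mod ?n = k'" using prow_facts(7)[OF k'] cmin_props(2)[OF k'] by simp
  have tne: "t \<noteq> lt ?q" using tm ltq kk by auto
  have cm0: "cmin M k div ?n * ?n + cmin M k mod ?n = cmin M k" by (rule div_mult_mod_eq)
  then have cm: "cmin M k div ?n * ?n + k = cmin M k" unfolding cmin_props(2)[OF k] .
  have "cmin M k div ?n \<le> degree (?q $ k)" using dg prow_facts(6)[OF k] by simp
  then have "cmin M k div ?n * ?n \<le> degree (?q $ k) * ?n" by (rule mult_le_mono1)
  then have "cmin M k \<le> t" unfolding t_def using cm by linarith
  then have "t \<in> bad M ?q" unfolding bad_def using tc tne tm k by simp
  then show False using prow_good(2)[OF k'] by simp
qed

definition pmat :: "'a::field poly mat \<Rightarrow> 'a poly mat" where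
  "pmat M = mat_of_rows (dim_col M) (map (prow M) (sorted_list_of_set (Sset M)))"

lemma Sset_finite: "finite (Sset M)" by (rule finite_subset[OF Sset_sub]) simp

lemma pmat_dims[simp]: fixes M :: "'a::field poly mat" shows "dim_col (pmat M) = dim_col M" "dim_row (pmat M) = length (sorted_list_of_set (Sset M))"
  unfolding pmat_def by simp_all

lemma pmat_row: fixes M :: "'a::field poly mat" assumes i: "i < dim_row (pmat M)"
  shows "row (pmat M) i = prow M (sorted_list_of_set (Sset M) ! i)"
    "sorted_list_of_set (Sset M) ! i \<in> Sset M"
proof -
  let ?sl = "sorted_list_of_set (Sset M)"
  have il: "i < length ?sl" using i pmat_dims by simp
  have "set ?sl = Sset M" using Sset_finite[of M] by simp
  then show mem: "?sl ! i \<in> Sset M" using nth_mem[OF il] by simp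
  have c: "map (prow M) ?sl ! i \<in> carrier_vec (dim_col M)"
    unfolding nth_map[OF il] by (rule carrier_vecI) (rule prow_facts(3)[OF mem])
  have il2: "i < length (map (prow M) ?sl)" using il by simp
  have "row (pmat M) i = map (prow M) ?sl ! i" unfolding pmat_def by (rule mat_of_rows_row[OF il2 c])
  then show "row (pmat M) i = prow M (?sl ! i)" unfolding nth_map[OF il] .
qed

lemma pmat_rows_in: fixes M :: "'a::field poly mat" shows "row_module (pmat M) \<subseteq> row_module M"
proof (rule rm_subset)
  show "\<forall>i<dim_row (pmat M). row (pmat M) i \<in> row_module M"
  proof (intro allI impI)
    fix i assume i: "i < dim_row (pmat M)"
    show "row (pmat M) i \<in> row_module M" using pmat_row[OF i] prow_facts(1) by simp
  qed
qed simp

lemma pmat_popov: fixes M :: "'a::field poly mat" shows "is_popov (pmat M)"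
proof -
  let ?P = "pmat M" and ?sl = "sorted_list_of_set (Sset M)"
  have ss: "sorted_wrt (<) ?sl" by (rule strict_sorted_list_of_set)
  have piv: "pivot_index (row ?P i) = ?sl ! i" if "i < dim_row ?P" for i
    using pmat_row[OF that] prow_facts(4) by simp
  have ent: "?P $$ (i', j) = prow M (?sl ! i') $ j" if "i' < dim_row ?P" "j < dim_col M" for i' j
    using pmat_row(1)[OF that(1)] that pmat_dims by (metis index_row(1))
  show ?thesis unfolding is_popov_def
  proof (intro conjI allI impI)
    fix i assume i: "i < dim_row ?P"
    show "row ?P i \<noteq> 0\<^sub>v (dim_col ?P)" using pmat_row[OF i] prow_facts(2) pmat_dims by simp
    have kn: "?sl ! i < dim_col M" using pmat_row(2)[OF i] Sset_sub by auto
    show "lead_coeff (?P $$ (i, pivot_index (row ?P i))) = 1"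
      using piv[OF i] ent[OF i kn] prow_facts(5)[OF pmat_row(2)[OF i]] by simp
  next
    fix i i' assume h: "i < i' \<and> i' < dim_row ?P"
    then show "pivot_index (row ?P i) < pivot_index (row ?P i')"
      using piv ss unfolding sorted_wrt_iff_nth_less pmat_dims by auto
  next
    fix i i' assume i: "i < dim_row ?P" and i': "i' < dim_row ?P" and ne: "i' \<noteq> i"
    have kn: "?sl ! i < dim_col M" using pmat_row(2)[OF i] Sset_sub by auto
    have dis: "?sl ! i \<noteq> ?sl ! i'" using ne i i' distinct_sorted_list_of_set[of "Sset M"] pmat_dims
      by (simp add: nth_eq_iff_index_eq)
    show "?P $$ (i', pivot_index (row ?P i)) = 0 \<or>
        degree (?P $$ (i', pivot_index (row ?P i))) < degree (?P $$ (i, pivot_index (row ?P i)))"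
      unfolding piv[OF i] ent[OF i kn] ent[OF i' kn]
      using prow_other[OF pmat_row(2)[OF i] pmat_row(2)[OF i'] dis] .
  qed
qed

lemma pmat_gen: fixes M :: "'a::field poly mat"
  shows "v \<in> row_module M \<Longrightarrow> v \<in> row_module (pmat M)"
proof (induction "lt v" arbitrary: v rule: less_induct)
  case less
  let ?n = "dim_col M" and ?P = "pmat M" and ?sl = "sorted_list_of_set (Sset M)"
  have dv: "dim_vec v = ?n" using rm_dim[OF less.prems] .
  show ?case
  proof (cases "v = 0\<^sub>v ?n")
    case True
    then show ?thesis using rm_zero[of ?P] pmat_dims by simp
  next
    case False
    have n: "?n > 0" using nz_dim[of v] False dv by simp
    have vnz: "v \<noteq> 0\<^sub>v (dim_vec v)" using False dv by simp
    have T: "lt v \<in> Tset M" by (rule Tset_I[OF less.prems False])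
    define k where "k = lt v mod ?n"
    have k: "k \<in> Sset M" unfolding k_def Sset_def using T by simp
    have cle: "cmin M k \<le> lt v" using cmin_props(3)[OF k T] k_def by simp
    obtain i where i: "i < length ?sl" "?sl ! i = k" using k Sset_finite by (metis in_set_conv_nth set_sorted_list_of_set)
    have rowi: "row ?P i = prow M k" using pmat_row(1)[of i M] i pmat_dims by simp
    have rowP: "prow M k \<in> row_module ?P" using rm_row[of i ?P] i pmat_dims rowi by simp
    define e where "e = lt v div ?n - cmin M k div ?n"
    have et: "e * ?n + cmin M k = lt v" unfolding e_def
      by (rule split_code) (use cmin_props(2)[OF k] cle k_def in auto)
    define \<alpha> where "\<alpha> = tc v (lt v)"
    have \<alpha>: "\<alpha> \<noteq> 0" unfolding \<alpha>_def using lt_tc[OF vnz] .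
    have mnz: "monom \<alpha> e \<noteq> 0" using \<alpha> by simp
    let ?q = "prow M k"
    have dq: "dim_vec ?q = ?n" using prow_facts(3)[OF k] .
    have q': "?q \<noteq> 0\<^sub>v (dim_vec ?q)" using prow_facts(2)[OF k] dq by simp
    have tcq: "tc ?q (lt ?q) = 1" using prow_good(1)[OF k] unfolding Pset_def by simp
    define s where "s = monom \<alpha> e \<cdot>\<^sub>v ?q"
    have lts: "lt s = lt v" unfolding s_def using lt_smult(2)[OF mnz q'] et prow_facts(7)[OF k] dq
      by (simp add: degree_monom_eq[OF \<alpha>])
    have tcs: "tc s (lt v) = \<alpha>" using lt_smult(3)[OF mnz q'] lts tcq
      unfolding s_def by (simp add: lead_coeff_monom degree_monom_eq[OF \<alpha>])
    have sP: "s \<in> row_module ?P" unfolding s_def by (rule rm_smult[OF rowP])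
    have sN: "s \<in> row_module M" unfolding s_def by (rule rm_smult[OF prow_facts(1)[OF k]])
    have ds: "dim_vec s = ?n" using rm_dim[OF sN] .
    define v' where "v' = v - s"
    have v'N: "v' \<in> row_module M" unfolding v'_def by (rule rm_diff[OF less.prems sN])
    have dv': "dim_vec v' = ?n" using rm_dim[OF v'N] .
    have tcv': "tc v' t = tc v t - tc s t" for t unfolding v'_def using tc_diff[of v s t] dv ds n by simp
    have vsum: "v = v' + s" unfolding v'_def using dv ds by (intro eq_vecI) auto
    show ?thesis
    proof (cases "v' = 0\<^sub>v ?n")
      case True
      have "v = s" using vsum True ds by (intro eq_vecI) auto
      then show ?thesis using sP by simp
    next
      case False
      have "tc v' t = 0" if "lt v \<le> t" for t
      proof (cases "t = lt v")
        case True then show ?thesis using tcv' tcs \<alpha>_def by simp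
      next
        case False
        then have "lt v < t" using that by simp
        then show ?thesis using tcv' tc_above[of v t] tc_above[of s t] lts dv ds n by simp
      qed
      moreover have "tc v' (lt v') \<noteq> 0" using lt_tc[of v'] False dv' by simp
      ultimately have "lt v' < lt v" by (meson not_le)
      then have "v' \<in> row_module ?P" using less.hyps v'N by blast
      then show ?thesis using vsum rm_add[OF _ sP] by simp
    qed
  qed
qed

lemma popov_exists: fixes M :: "'a::field poly mat"
  shows "is_popov (pmat M) \<and> dim_col (pmat M) = dim_col M \<and> row_module (pmat M) = row_module M"
  using pmat_popov pmat_dims pmat_rows_in pmat_gen by blast


lemma popov_row: fixes P :: "'a::field poly mat" assumes "is_popov P" "i < dim_row P"
  shows "row P i \<noteq> 0\<^sub>v (dim_vec (row P i))" "dim_vec (row P i) = dim_col P"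
  using assms unfolding is_popov_def by auto

lemma popov_piv_lt: fixes P :: "'a::field poly mat" assumes "is_popov P" "i < dim_row P"
  shows "pivot_index (row P i) = lt (row P i) mod dim_col P"
  using lt_props(5)[OF popov_row(1)[OF assms]] popov_row(2)[OF assms] by simp

lemma popov_dist: fixes P :: "'a::field poly mat" assumes "is_popov P" "i < dim_row P" "i' < dim_row P" "i \<noteq> i'"
  shows "pivot_index (row P i) \<noteq> pivot_index (row P i')"
proof -
  have "i < i' \<or> i' < i" using assms(4) by auto
  then show ?thesis using assms(1-3) unfolding is_popov_def by (metis less_irrefl)
qed

lemma popov_dist_lt: fixes P :: "'a::field poly mat" assumes "is_popov P" "i < dim_row P" "i' < dim_row P" "i \<noteq> i'"
  shows "lt (row P i) mod dim_col P \<noteq> lt (row P i') mod dim_col P"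
  using popov_dist[OF assms] popov_piv_lt[OF assms(1,2)] popov_piv_lt[OF assms(1,3)] by simp

lemma popov_pred: fixes P :: "'a::field poly mat"
  assumes P: "is_popov P" and v: "v \<in> row_module P" and nz: "v \<noteq> 0\<^sub>v (dim_col P)"
  shows "\<exists>i<dim_row P. lt v mod dim_col P = lt (row P i) mod dim_col P \<and> lt (row P i) \<le> lt v"
proof -
  let ?n = "dim_col P" and ?r = "dim_row P"
  obtain c where vc: "v = comb ?n ?r c (row P)" using v unfolding rm_comb by auto
  have n: "?n > 0" using nz_dim[of v] nz rm_dim[OF v] by simp
  have ex: "\<exists>i<?r. c i \<noteq> 0"
  proof (rule ccontr)
    assume "\<not> ?thesis"
    then have "v = 0\<^sub>v ?n" unfolding vc comb_def by (intro eq_vecI) auto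
    then show False using nz by simp
  qed
  have "comb ?n ?r c (row P) \<noteq> 0\<^sub>v ?n \<and> (\<exists>i<?r. c i \<noteq> 0 \<and> lt (comb ?n ?r c (row P)) = degree (c i) * ?n + lt (row P i))"
  proof (rule PP[OF n])
    show "\<forall>i<?r. dim_vec (row P i) = ?n" by simp
    show "\<forall>i<?r. row P i \<noteq> 0\<^sub>v ?n" using P unfolding is_popov_def by auto
    show "\<forall>i<?r. \<forall>i'<?r. i \<noteq> i' \<longrightarrow> lt (row P i) mod ?n \<noteq> lt (row P i') mod ?n"
      using popov_dist_lt[OF P] by blast
  qed (rule ex)
  then obtain i where i: "i < ?r" "lt v = degree (c i) * ?n + lt (row P i)" unfolding vc[symmetric] by auto
  then show ?thesis by (intro exI[of _ i]) simp
qed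

lemma popov_lt_div: fixes P :: "'a::field poly mat" assumes "is_popov P" "i < dim_row P"
  shows "degree (P $$ (i, lt (row P i) mod dim_col P)) = lt (row P i) div dim_col P"
    "lead_coeff (P $$ (i, lt (row P i) mod dim_col P)) = tc (row P i) (lt (row P i))"
    "lt (row P i) mod dim_col P < dim_col P"
proof -
  note L = lt_props[OF popov_row(1)[OF assms]]
  have d: "dim_vec (row P i) = dim_col P" by simp
  show "lt (row P i) mod dim_col P < dim_col P" using L(1) d by simp
  then show "degree (P $$ (i, lt (row P i) mod dim_col P)) = lt (row P i) div dim_col P"
    "lead_coeff (P $$ (i, lt (row P i) mod dim_col P)) = tc (row P i) (lt (row P i))"
    using L(3,4) d assms(2) by auto
qed

lemma stepA: fixes P Q :: "'a::field poly mat"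
  assumes P: "is_popov P" and Q: "is_popov Q" and d: "dim_col P = dim_col Q"
    and m: "row_module P = row_module Q" and i: "i < dim_row P"
  shows "\<exists>i'<dim_row Q. lt (row P i) = lt (row Q i')"
proof -
  let ?n = "dim_col P"
  have pQ: "row P i \<in> row_module Q" using rm_row[OF i] m by simp
  have pnz: "row P i \<noteq> 0\<^sub>v (dim_col Q)" using P i d unfolding is_popov_def by auto
  obtain i' where i': "i' < dim_row Q" "lt (row P i) mod ?n = lt (row Q i') mod ?n" "lt (row Q i') \<le> lt (row P i)"
    using popov_pred[OF Q pQ pnz] d by auto
  have qP: "row Q i' \<in> row_module P" using rm_row[OF i'(1)] m by simp
  have qnz: "row Q i' \<noteq> 0\<^sub>v (dim_col P)" using Q i'(1) d unfolding is_popov_def by auto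
  obtain i'' where i'': "i'' < dim_row P" "lt (row Q i') mod ?n = lt (row P i'') mod ?n" "lt (row P i'') \<le> lt (row Q i')"
    using popov_pred[OF P qP qnz] by auto
  have "i'' = i" using popov_dist_lt[OF P i''(1) i] i'(2) i''(2) by auto
  then show ?thesis using i' i'' by (intro exI[of _ i']) auto
qed

lemma stepB: fixes P Q :: "'a::field poly mat"
  assumes P: "is_popov P" and Q: "is_popov Q" and d: "dim_col P = dim_col Q"
    and m: "row_module P = row_module Q" and i: "i < dim_row P" and i': "i' < dim_row Q"
    and eq: "lt (row P i) = lt (row Q i')"
  shows "row P i = row Q i'"
proof (rule ccontr)
  assume ne: "row P i \<noteq> row Q i'"
  let ?n = "dim_col P" and ?p = "row P i" and ?q = "row Q i'"
  define r where "r = ?p - ?q"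
  have rP: "r \<in> row_module P" unfolding r_def using rm_diff[OF rm_row[OF i]] rm_row[OF i'] m by simp
  have dr: "dim_vec r = ?n" using rm_dim[OF rP] .
  have rnz: "r \<noteq> 0\<^sub>v ?n"
  proof
    assume "r = 0\<^sub>v ?n"
    then have "?p = ?q" unfolding r_def using d by (intro eq_vecI) (auto simp: vec_eq_iff)
    then show False using ne by simp
  qed
  have n: "?n > 0" using nz_dim[of r] rnz dr by simp
  have dp: "dim_vec ?p = ?n" and dq: "dim_vec ?q = ?n" using d by auto
  obtain i2 where i2: "i2 < dim_row P" "lt r mod ?n = lt (row P i2) mod ?n" "lt (row P i2) \<le> lt r"
    using popov_pred[OF P rP rnz] by auto
  obtain i3 where i3: "i3 < dim_row Q" "lt (row P i2) = lt (row Q i3)" using stepA[OF P Q d m i2(1)] by auto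
  define t where "t = lt r"
  define kk where "kk = t mod ?n"
  have kk: "kk < ?n" unfolding kk_def using n by simp
  have tcr: "tc r t \<noteq> 0" unfolding t_def using lt_tc[of r] rnz dr by simp
  have tcr': "tc r t = tc ?p t - tc ?q t" unfolding r_def using tc_diff[of ?p ?q t] dp dq n by simp
  have tcpE: "tc ?p t = coeff (P $$ (i, kk)) (t div ?n)" unfolding tc_def kk_def using dp kk kk_def i by simp
  have tcqE: "tc ?q t = coeff (Q $$ (i', kk)) (t div ?n)" unfolding tc_def kk_def using dq kk kk_def i' d by simp
  note A2 = popov_lt_div[OF P i2(1)]
  note A3 = popov_lt_div[OF Q i3(1)]
  have k2: "lt (row P i2) mod ?n = kk" using i2(2) kk_def t_def by simp
  have k3: "lt (row Q i3) mod ?n = kk" using k2 i3(2) by simp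
  have dle: "lt (row P i2) div ?n \<le> t div ?n"
  proof -
    have "lt (row P i2) div ?n * ?n + kk \<le> t div ?n * ?n + kk"
      using i2(3) div_mult_mod_eq[of "lt (row P i2)" ?n] div_mult_mod_eq[of t ?n] k2 kk_def t_def by simp
    then show ?thesis by (rule code_le_D[OF kk kk])
  qed
  show False
  proof (cases "i2 = i")
    case True
    have ltpq: "lt ?q = lt ?p" using eq by simp
    have tge: "lt ?p \<le> t" using i2(3) True t_def by simp
    show False
    proof (cases "lt ?p = t")
      case True
      have pv: "pivot_index ?p = kk" using popov_piv_lt[OF P i] True kk_def by simp
      have qv: "pivot_index ?q = kk" using popov_piv_lt[OF Q i'] True ltpq kk_def d by simp
      have "lead_coeff (P $$ (i, kk)) = 1" using P i pv unfolding is_popov_def by auto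
      moreover have "lead_coeff (Q $$ (i', kk)) = 1" using Q i' qv unfolding is_popov_def by auto
      moreover have "tc ?p t = lead_coeff (P $$ (i, kk))"
        using popov_lt_div(2)[OF P i] True kk_def by simp
      moreover have "tc ?q t = lead_coeff (Q $$ (i', kk))"
        using popov_lt_div(2)[OF Q i'] True ltpq kk_def d by simp
      ultimately show False using tcr tcr' by simp
    next
      case False
      then have "lt ?p < t" using tge by simp
      then have "tc ?p t = 0" "tc ?q t = 0" using tc_above[of ?p t] tc_above[of ?q t] ltpq dp dq n by auto
      then show False using tcr tcr' by simp
    qed
  next
    case False
    have pv2: "pivot_index (row P i2) = kk" using popov_piv_lt[OF P i2(1)] k2 by simp
    have pvi: "pivot_index ?p \<noteq> kk" using popov_dist[OF P i i2(1)] False pv2 by auto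
    have pv3: "pivot_index (row Q i3) = kk" using popov_piv_lt[OF Q i3(1)] k3 d by simp
    have pvi': "pivot_index ?q = pivot_index ?p" using popov_piv_lt[OF P i] popov_piv_lt[OF Q i'] eq d by simp
    have i3i': "i3 \<noteq> i'" using pvi pvi' pv3 by auto
    have cP: "P $$ (i, kk) = 0 \<or> degree (P $$ (i, kk)) < degree (P $$ (i2, kk))"
      using P i i2(1) False pv2 unfolding is_popov_def by metis
    have cQ: "Q $$ (i', kk) = 0 \<or> degree (Q $$ (i', kk)) < degree (Q $$ (i3, kk))"
      using Q i' i3(1) i3i' pv3 unfolding is_popov_def by metis
    have dg2: "degree (P $$ (i2, kk)) = lt (row P i2) div ?n" using A2(1) k2 by simp
    have dg3: "degree (Q $$ (i3, kk)) = lt (row P i2) div ?n" using A3(1) k3 i3(2) d by simp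
    have "coeff (P $$ (i, kk)) (t div ?n) = 0"
      using cP dg2 dle by (auto intro: coeff_eq_0)
    moreover have "coeff (Q $$ (i', kk)) (t div ?n) = 0"
      using cQ dg3 dle by (auto intro: coeff_eq_0)
    ultimately show False using tcr tcr' tcpE tcqE by simp
  qed
qed

lemma popov_unique: fixes P Q :: "'a::field poly mat"
  assumes P: "is_popov P" and Q: "is_popov Q" and d: "dim_col P = dim_col Q"
    and m: "row_module P = row_module Q"
  shows "P = Q"
proof -
  define xs where "xs = map (\<lambda>i. pivot_index (row P i)) [0..<dim_row P]"
  define ys where "ys = map (\<lambda>i. pivot_index (row Q i)) [0..<dim_row Q]"
  have sx: "sorted_wrt (<) xs" unfolding xs_def sorted_wrt_iff_nth_less using P unfolding is_popov_def by auto
  have sy: "sorted_wrt (<) ys" unfolding ys_def sorted_wrt_iff_nth_less using Q unfolding is_popov_def by auto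
  have sub: "set xs \<subseteq> set ys"
  proof
    fix x assume "x \<in> set xs"
    then obtain i where i: "i < dim_row P" "x = pivot_index (row P i)" unfolding xs_def by auto
    obtain i' where "i' < dim_row Q" "lt (row P i) = lt (row Q i')" using stepA[OF P Q d m i(1)] by auto
    then show "x \<in> set ys" unfolding ys_def using i popov_piv_lt[OF P i(1)] popov_piv_lt[OF Q] d by auto
  qed
  have sub2: "set ys \<subseteq> set xs"
  proof
    fix x assume "x \<in> set ys"
    then obtain i where i: "i < dim_row Q" "x = pivot_index (row Q i)" unfolding ys_def by auto
    obtain i' where "i' < dim_row P" "lt (row Q i) = lt (row P i')" using stepA[OF Q P d[symmetric] m[symmetric] i(1)] by auto
    then show "x \<in> set xs" unfolding xs_def using i popov_piv_lt[OF Q i(1)] popov_piv_lt[OF P] d by auto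
  qed
  have xy: "xs = ys" by (rule sorted_distinct_set_unique) (use sx sy sub sub2 strict_sorted_iff in auto)
  have r: "dim_row P = dim_row Q" using arg_cong[OF xy, of length] unfolding xs_def ys_def by simp
  have rows: "row P i = row Q i" if i: "i < dim_row P" for i
  proof -
    obtain i' where i': "i' < dim_row Q" "lt (row P i) = lt (row Q i')" using stepA[OF P Q d m i] by auto
    have "pivot_index (row P i) = pivot_index (row Q i)"
      using arg_cong[OF xy, of "\<lambda>l. l ! i"] i r unfolding xs_def ys_def by simp
    moreover have "pivot_index (row P i) = pivot_index (row Q i')"
      using popov_piv_lt[OF P i] popov_piv_lt[OF Q i'(1)] i'(2) d by simp
    ultimately have "i' = i" using popov_dist[OF Q i'(1), of i] i r by fastforce
    then show ?thesis using stepB[OF P Q d m i i'(1) i'(2)] by simp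
  qed
  show ?thesis
  proof (rule eq_matI)
    fix i j assume "i < dim_row Q" "j < dim_col Q"
    then show "P $$ (i, j) = Q $$ (i, j)" using rows[of i] r d by (metis index_row(1))
  qed (use r d in auto)
qed

lemma popov_form_spec: fixes M :: "'a::field poly mat"
  shows "is_popov (popov_form M) \<and> dim_col (popov_form M) = dim_col M \<and> row_module (popov_form M) = row_module M"
proof -
  have "\<exists>!P. is_popov P \<and> dim_col P = dim_col M \<and> row_module P = row_module M"
  proof (rule ex_ex1I)
    show "\<exists>P. is_popov P \<and> dim_col P = dim_col M \<and> row_module P = row_module M" using popov_exists by blast
  next
    fix P Q assume "is_popov P \<and> dim_col P = dim_col M \<and> row_module P = row_module M"
      "is_popov Q \<and> dim_col Q = dim_col M \<and> row_module Q = row_module M"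
    then show "P = Q" using popov_unique[of P Q] by auto
  qed
  then show ?thesis unfolding popov_form_def by (rule theI')
qed


lemma piv_char: fixes M :: "'a::field poly mat"
  shows "set (pivot_support M) = {pivot_index v | v. v \<in> row_module M \<and> v \<noteq> 0\<^sub>v (dim_col M)}"
proof -
  let ?P = "popov_form M"
  note S = popov_form_spec[of M]
  have P: "is_popov ?P" using S by simp
  have e: "set (pivot_support M) = {pivot_index (row ?P i) | i. i < dim_row ?P}"
    unfolding pivot_support_def by auto
  show ?thesis unfolding e
  proof (intro equalityI subsetI)
    fix x assume "x \<in> {pivot_index (row ?P i) | i. i < dim_row ?P}"
    then obtain i where i: "i < dim_row ?P" "x = pivot_index (row ?P i)" by auto
    have "row ?P i \<in> row_module M" using rm_row[OF i(1)] S by simp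
    moreover have "row ?P i \<noteq> 0\<^sub>v (dim_col M)" using P i S unfolding is_popov_def by auto
    ultimately show "x \<in> {pivot_index v | v. v \<in> row_module M \<and> v \<noteq> 0\<^sub>v (dim_col M)}" using i by auto
  next
    fix x assume "x \<in> {pivot_index v | v. v \<in> row_module M \<and> v \<noteq> 0\<^sub>v (dim_col M)}"
    then obtain v where v: "v \<in> row_module M" "v \<noteq> 0\<^sub>v (dim_col M)" "x = pivot_index v" by auto
    have vP: "v \<in> row_module ?P" using v S by simp
    have dv: "dim_vec v = dim_col M" using rm_dim[OF v(1)] .
    obtain i where i: "i < dim_row ?P" "lt v mod dim_col ?P = lt (row ?P i) mod dim_col ?P"
      using popov_pred[OF P vP] v(2) S by auto
    have "pivot_index v = lt v mod dim_col M" using lt_props(5)[of v] v(2) dv by simp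
    then have "x = pivot_index (row ?P i)" using v(3) i(2) popov_piv_lt[OF P i(1)] S by simp
    then show "x \<in> {pivot_index (row ?P i) | i. i < dim_row ?P}" using i(1) by auto
  qed
qed

definition proj :: "nat set \<Rightarrow> 'a vec \<Rightarrow> 'a vec" where
  "proj J v = vec (card J) (\<lambda>i. v $ pick J i)"

lemma pick_lt: assumes "J \<subseteq> {0..<n}" "i < card J" shows "pick J i < n"
  using pick_in_set_le[OF assms(2)] assms(1) by auto

lemma proj_pivot: fixes v :: "'a::field poly vec"
  assumes J: "J \<subseteq> {0..<dim_vec v}" and v: "v \<noteq> 0\<^sub>v (dim_vec v)" and pj: "pivot_index v \<in> J"
  defines "i \<equiv> card {a\<in>J. a < pivot_index v}"
  shows "proj J v \<noteq> 0\<^sub>v (card J)" "pivot_index (proj J v) = i" "pick J i = pivot_index v" "i < card J"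
proof -
  let ?n = "dim_vec v" and ?m = "card J" and ?w = "proj J v"
  have fin: "finite J" using J finite_subset by blast
  note L = lt_props[OF v]
  define j where "j = pivot_index v"
  define a where "a = lt v div ?n"
  have jl: "j = lt v mod ?n" using L(5) j_def by simp
  have ltv: "lt v = a * ?n + j" using jl a_def by simp
  show im: "i < ?m" unfolding i_def
  proof (rule psubset_card_mono[OF fin])
    show "{a \<in> J. a < pivot_index v} \<subset> J" using pj by auto
  qed
  show pk: "pick J i = pivot_index v" unfolding i_def by (rule pick_card_in_set[OF pj])
  have m: "?m > 0" using im by simp
  have dw: "dim_vec ?w = ?m" unfolding proj_def by simp
  have wi: "?w $ k = v $ pick J k" if "k < ?m" for k unfolding proj_def using that by simp
  have jn: "j < ?n" using L(1) jl by simp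
  have tc0: "tc ?w (a * ?m + i) = coeff (v $ j) a"
    using tc_code[of i ?w a] dw im wi[OF im] pk j_def by simp
  have tcnz: "tc ?w (a * ?m + i) \<noteq> 0" unfolding tc0 using L(2,3,4) jl a_def lt_tc[OF v] by simp
  have above: "tc ?w t = 0" if "a * ?m + i < t" for t
  proof -
    let ?b = "t div ?m" and ?k = "t mod ?m"
    have k: "?k < ?m" using m by simp
    have tw: "tc ?w t = coeff (v $ pick J ?k) ?b" unfolding tc_def dw using wi[OF k] by simp
    have pkn: "pick J ?k < ?n" using pick_lt[OF J k] .
    show ?thesis
    proof (cases "v $ pick J ?k = 0")
      case True then show ?thesis using tw by simp
    next
      case False
      have e: "degree (v $ pick J ?k) * ?n + pick J ?k \<le> a * ?n + j"
        using entry_le_lt[OF pkn False] ltv by simp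
      have tt: "t = ?b * ?m + ?k" by simp
      have "a * ?m + i < ?b * ?m + ?k" using that tt by linarith
      then have "\<not> (?b * ?m + ?k \<le> a * ?m + i)" by simp
      then have ba: "a < ?b \<or> a = ?b \<and> i < ?k" using code_le[OF k im, of ?b a] by auto
      have "degree (v $ pick J ?k) < ?b"
      proof (cases "a < ?b")
        case True
        have "degree (v $ pick J ?k) \<le> a" using code_le_D[OF pkn jn e] .
        then show ?thesis using True by simp
      next
        case False
        then have ab: "a = ?b" "i < ?k" using ba by auto
        have "pick J i < pick J ?k" using pick_mono_le[OF k ab(2)] .
        then have "j < pick J ?k" using pk j_def by simp
        then have "degree (v $ pick J ?k) < a" using code_le[OF pkn jn, of "degree (v $ pick J ?k)" a] e by auto
        then show ?thesis using ab by simp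
      qed
      then show ?thesis using tw by (simp add: coeff_eq_0)
    qed
  qed
  have ltw: "lt ?w = a * ?m + i" by (rule lt_unique) (use tcnz above m dw in auto)
  have wnz: "?w \<noteq> 0\<^sub>v (dim_vec ?w)" using tc_nz[OF tcnz] m dw by simp
  then show "?w \<noteq> 0\<^sub>v ?m" using dw by simp
  show "pivot_index ?w = i" using lt_props(5)[OF wnz] ltw dw im by simp
qed


lemma pick_upt: assumes "i < r" shows "pick {0..<r} i = i"
proof -
  have "{a \<in> {0..<r}. a < i} = {0..<i}" using assms by auto
  then show ?thesis using pick_card_in_set[of i "{0..<r}"] assms by simp
qed

lemma sub_dims: fixes A :: "'a::field poly mat" assumes J: "J \<subseteq> {0..<dim_col A}"
  shows "dim_row (submatrix A {0..<dim_row A} J) = dim_row A"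
    "dim_col (submatrix A {0..<dim_row A} J) = card J"
    "\<And>i j. i < dim_row A \<Longrightarrow> j < card J \<Longrightarrow> submatrix A {0..<dim_row A} J $$ (i, j) = A $$ (i, pick J j)"
proof -
  have e1: "{i. i < dim_row A \<and> i \<in> {0..<dim_row A}} = {0..<dim_row A}" by auto
  have e2: "{j. j < dim_col A \<and> j \<in> J} = J" using J by auto
  show d1: "dim_row (submatrix A {0..<dim_row A} J) = dim_row A" unfolding submatrix_def e1 by simp
  show d2: "dim_col (submatrix A {0..<dim_row A} J) = card J" unfolding submatrix_def e2 by simp
  fix i j assume "i < dim_row A" "j < card J"
  then show "submatrix A {0..<dim_row A} J $$ (i, j) = A $$ (i, pick J j)"
    using submatrix_index[of i A "{0..<dim_row A}" j J] pick_upt e1 e2 by simp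
qed

lemma rm_sub: fixes A :: "'a::field poly mat" assumes J: "J \<subseteq> {0..<dim_col A}"
  shows "row_module (submatrix A {0..<dim_row A} J) = proj J ` row_module A"
proof -
  let ?B = "submatrix A {0..<dim_row A} J"
  note D = sub_dims[OF J]
  have e: "vec (dim_col ?B) (\<lambda>j. \<Sum>i<dim_row ?B. c i * ?B $$ (i, j)) =
    proj J (vec (dim_col A) (\<lambda>j. \<Sum>i<dim_row A. c i * A $$ (i, j)))" for c
  proof (rule eq_vecI)
    fix j assume "j < dim_vec (proj J (vec (dim_col A) (\<lambda>j. \<Sum>i<dim_row A. c i * A $$ (i, j))))"
    then have j: "j < card J" unfolding proj_def by simp
    have pj: "pick J j < dim_col A" using pick_lt[OF J j] .
    show "vec (dim_col ?B) (\<lambda>j. \<Sum>i<dim_row ?B. c i * ?B $$ (i, j)) $ j =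
      proj J (vec (dim_col A) (\<lambda>j. \<Sum>i<dim_row A. c i * A $$ (i, j))) $ j"
      unfolding proj_def using j pj D by simp
  qed (simp add: D proj_def)
  show ?thesis unfolding row_module_def using e by auto
qed

lemma proj_dim[simp]: "dim_vec (proj J v) = card J" unfolding proj_def by simp

theorem lemma4p4:
  fixes A :: "'a::field poly mat" and J :: "nat set"
  assumes "J \<subseteq> {0..<dim_col A}"
  shows "set (pivot_support A) \<inter> J \<subseteq>
           set (map (pick J) (pivot_support (submatrix A {0..<dim_row A} J))) \<and>
         (set (pivot_support A) \<subseteq> J \<longrightarrow>
           set (pivot_support A) = set (map (pick J) (pivot_support (submatrix A {0..<dim_row A} J))))"
proof -
  let ?B = "submatrix A {0..<dim_row A} J" and ?n = "dim_col A" and ?m = "card J"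
  note J = assms
  note D = sub_dims[OF J]
  have RB: "row_module ?B = proj J ` row_module A" by (rule rm_sub[OF J])
  have part1: "set (pivot_support A) \<inter> J \<subseteq> set (map (pick J) (pivot_support ?B))"
  proof
    fix x assume "x \<in> set (pivot_support A) \<inter> J"
    then obtain v where v: "v \<in> row_module A" "v \<noteq> 0\<^sub>v ?n" "x = pivot_index v" "x \<in> J"
      unfolding piv_char by auto
    have dv: "dim_vec v = ?n" using rm_dim[OF v(1)] .
    note PJ = proj_pivot[of J v]
    have J': "J \<subseteq> {0..<dim_vec v}" using J dv by simp
    have v': "v \<noteq> 0\<^sub>v (dim_vec v)" using v(2) dv by simp
    have pj: "pivot_index v \<in> J" using v by simp
    let ?i = "card {a\<in>J. a < pivot_index v}"
    have "proj J v \<in> row_module ?B" using RB v(1) by simp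
    moreover have "proj J v \<noteq> 0\<^sub>v (dim_col ?B)" using PJ(1)[OF J' v' pj] D by simp
    ultimately have "pivot_index (proj J v) \<in> set (pivot_support ?B)" unfolding piv_char by blast
    then have "pick J ?i \<in> pick J ` set (pivot_support ?B)" using PJ(2)[OF J' v' pj] by simp
    then show "x \<in> set (map (pick J) (pivot_support ?B))" using PJ(3)[OF J' v' pj] v(3) by simp
  qed
  have part2: "set (map (pick J) (pivot_support ?B)) \<subseteq> set (pivot_support A)"
    if sub: "set (pivot_support A) \<subseteq> J"
  proof
    fix y assume "y \<in> set (map (pick J) (pivot_support ?B))"
    then obtain x where x: "x \<in> set (pivot_support ?B)" "y = pick J x" by auto
    from x(1) obtain w where w0: "w \<in> row_module ?B" "w \<noteq> 0\<^sub>v (dim_col ?B)" "x = pivot_index w"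
      unfolding piv_char by blast
    have w: "w \<in> row_module ?B" "w \<noteq> 0\<^sub>v (dim_col ?B)" "y = pick J (pivot_index w)"
      using w0 x by auto
    obtain v where v: "v \<in> row_module A" "w = proj J v" using w(1) RB by auto
    let ?P = "popov_form A"
    note S = popov_form_spec[of A]
    have P: "is_popov ?P" using S by simp
    have vP: "v \<in> row_module ?P" using v S by simp
    obtain c where vc: "v = comb ?n (dim_row ?P) c (row ?P)" using vP S unfolding rm_comb by auto
    define b where "b i = proj J (row ?P i)" for i
    have dw: "dim_vec w = ?m" using v(2) by simp
    have m: "?m > 0" using nz_dim[of w] w(2) D dw by simp
    have wc: "w = comb ?m (dim_row ?P) c b"
    proof (rule eq_vecI)
      fix j assume "j < dim_vec (comb ?m (dim_row ?P) c b)"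
      then have j: "j < ?m" by simp
      have pj: "pick J j < ?n" using pick_lt[OF J j] .
      show "w $ j = comb ?m (dim_row ?P) c b $ j"
        unfolding v(2) vc b_def comb_def proj_def using j pj S by simp
    qed (simp add: v(2))
    have rowinfo: "b i \<noteq> 0\<^sub>v ?m \<and> pick J (pivot_index (b i)) = pivot_index (row ?P i) \<and>
        pivot_index (row ?P i) \<in> set (pivot_support A)" if i: "i < dim_row ?P" for i
    proof -
      have rA: "row ?P i \<in> row_module A" using rm_row[OF i] S by simp
      have rnz: "row ?P i \<noteq> 0\<^sub>v ?n" using P i S unfolding is_popov_def by auto
      have inS: "pivot_index (row ?P i) \<in> set (pivot_support A)" unfolding piv_char using rA rnz by blast
      have dr: "dim_vec (row ?P i) = ?n" using S by simp
      have J': "J \<subseteq> {0..<dim_vec (row ?P i)}" using J dr by simp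
      have r': "row ?P i \<noteq> 0\<^sub>v (dim_vec (row ?P i))" using rnz dr by simp
      have pj: "pivot_index (row ?P i) \<in> J" using inS sub by blast
      note PJ = proj_pivot[OF J' r' pj]
      show ?thesis unfolding b_def using PJ inS by simp
    qed
    have ltb: "lt (b i) mod ?m = pivot_index (b i)" if "i < dim_row ?P" for i
    proof -
      have "b i \<noteq> 0\<^sub>v (dim_vec (b i))" using rowinfo[OF that] unfolding b_def by simp
      then have "pivot_index (b i) = lt (b i) mod dim_vec (b i)" by (rule lt_props(5))
      then show ?thesis unfolding b_def by simp
    qed
    have ex: "\<exists>i<dim_row ?P. c i \<noteq> 0"
    proof (rule ccontr)
      assume "\<not> ?thesis"
      then have "w = 0\<^sub>v ?m" unfolding wc comb_def by (intro eq_vecI) auto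
      then show False using w(2) D by simp
    qed
    have "comb ?m (dim_row ?P) c b \<noteq> 0\<^sub>v ?m \<and> (\<exists>i<dim_row ?P. c i \<noteq> 0 \<and> lt (comb ?m (dim_row ?P) c b) = degree (c i) * ?m + lt (b i))"
    proof (rule PP[OF m])
      show "\<forall>i<dim_row ?P. dim_vec (b i) = ?m" unfolding b_def by simp
      show "\<forall>i<dim_row ?P. b i \<noteq> 0\<^sub>v ?m" using rowinfo by blast
      show "\<forall>i<dim_row ?P. \<forall>i'<dim_row ?P. i \<noteq> i' \<longrightarrow> lt (b i) mod ?m \<noteq> lt (b i') mod ?m"
      proof (intro allI impI)
        fix i i' assume h: "i < dim_row ?P" "i' < dim_row ?P" "i \<noteq> i'"
        have "pivot_index (row ?P i) \<noteq> pivot_index (row ?P i')" using popov_dist[OF P h] .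
        then have "pivot_index (b i) \<noteq> pivot_index (b i')" using rowinfo[OF h(1)] rowinfo[OF h(2)] by metis
        then show "lt (b i) mod ?m \<noteq> lt (b i') mod ?m" using ltb h by simp
      qed
    qed (rule ex)
    then obtain i where i: "i < dim_row ?P" "lt w = degree (c i) * ?m + lt (b i)" unfolding wc[symmetric] by auto
    have wnz: "w \<noteq> 0\<^sub>v (dim_vec w)" using w(2) D dw by simp
    have "pivot_index w = lt w mod ?m" using lt_props(5)[OF wnz] dw by simp
    also have "\<dots> = lt (b i) mod ?m" using i(2) by simp
    also have "\<dots> = pivot_index (b i)" using ltb[OF i(1)] .
    finally have "y = pivot_index (row ?P i)" using w(3) rowinfo[OF i(1)] by simp
    then show "y \<in> set (pivot_support A)" using rowinfo[OF i(1)] by simp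
  qed
  show ?thesis
  proof (intro conjI impI)
    show "set (pivot_support A) \<inter> J \<subseteq> set (map (pick J) (pivot_support ?B))" by (rule part1)
  next
    assume sub: "set (pivot_support A) \<subseteq> J"
    show "set (pivot_support A) = set (map (pick J) (pivot_support ?B))"
      using part1 part2[OF sub] sub by blast
  qed
qed

end
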